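(* Let $\lambda\in\mathbb C$ with $\lambda\ne1$ and $\Re(\lambda)>0$, and let $Z$ be a complex random variable with $\mathbb E|Z|<\infty$, $\mathbb EZ\ne0$ and $Z\overset{\mathcal L}{=}e^{-\lambda T}(Z^{(1)}+\dots+Z^{(m)})$, where $Z^{(1)},\dots,Z^{(m)}$ are independent copies of $Z$ independent of $T$. Let $\varphi(t)=\mathbb E e^{i\langle t,Z\rangle}$ ($t\in\mathbb C$) and $\psi(r)=\max_{|t|=r}|\varphi(t)|$ for $r\ge0$. Then $\psi(r)<1$ for every $r>0$.
   Context: $m\ge2$ is an integer. $T=\tau_{(1)}+\dots+\tau_{(m-1)}$ where the $\tau_{(j)}$ are independent and $\tau_{(j)}$ is exponential with parameter $j$. For $x,y\in\mathbb C$, $\langle x,y\rangle=\Re(\overline xy)$. *)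

theory Defs
  imports "HOL-Probability.Probability"
begin

(* characteristic function of a complex random variable Z, with <t,z> = Re (cnj t * z) *)
definition char_fun_C :: "'a measure \<Rightarrow> ('a \<Rightarrow> complex) \<Rightarrow> complex \<Rightarrow> complex" where
  "char_fun_C M Z t = (\<integral>\<omega>. cis (Re (cnj t * Z \<omega>)) \<partial>M)"

(* psi(r) = max_{|t| = r} |phi(t)|, written as a supremum (the max is attained by continuity) *)
definition psi_C :: "'a measure \<Rightarrow> ('a \<Rightarrow> complex) \<Rightarrow> real \<Rightarrow> real" where
  "psi_C M Z r = Sup ((\<lambda>t. cmod (char_fun_C M Z t)) ` {t. cmod t = r})"

end

theory Submission
  imports Defs
begin


lemma cis_eq_1_small:
  fixes y :: real assumes "cis y = 1" "\<bar>y\<bar> < 2*pi" shows "y = 0"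
proof -
  have "cos y = 1" using assms(1) by (metis cis.sel(1) one_complex.sel(1))
  then obtain n :: int where n: "y = of_int n * 2 * pi" using cos_one_2pi_int by blast
  have "\<bar>of_int n\<bar> * (2*pi) < 2*pi" using assms(2) n by (simp add: abs_mult)
  then have "\<bar>of_int n :: real\<bar> < 1" by simp
  then have "n = 0" by linarith
  then show ?thesis using n by simp
qed

lemma geom_cis:
  fixes q y :: real
  assumes q: "0 < q" "q < 1" and H: "\<And>N::nat. N \<ge> 1 \<Longrightarrow> cis (q^N * y) = c"
  shows "y = 0 \<and> c = 1"
proof -
  have L: "(\<lambda>N. q^N * y) \<longlonglongrightarrow> 0"
    using LIMSEQ_power_zero[of q] q by (auto intro: tendsto_mult_left_zero)
  have "(\<lambda>N. cis (q^N * y)) \<longlonglongrightarrow> cis 0"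
    by (intro tendsto_intros L)
  moreover have "eventually (\<lambda>N. cis (q^N * y) = c) sequentially"
    using H eventually_sequentially by blast
  ultimately have "(\<lambda>N. c) \<longlonglongrightarrow> cis 0"
    using Lim_transform_eventually by (smt (verit, ccfv_SIG) eventually_mono tendsto_cong)
  then have c1: "c = 1" using LIMSEQ_const_iff by fastforce
  have "eventually (\<lambda>N. norm (q^N * y - 0) < 2*pi) sequentially"
    using L[unfolded LIMSEQ_def] by (simp add: dist_norm eventually_sequentially)
  then obtain N0 where N0: "\<And>N. N \<ge> N0 \<Longrightarrow> \<bar>q^N * y\<bar> < 2*pi" by (auto simp: eventually_sequentially)
  define N where "N = max 1 N0"
  have "q^N * y = 0"
    by (rule cis_eq_1_small) (use H[of N] c1 N0[of N] N_def in auto)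
  then have "y = 0" using q by simp
  with c1 show ?thesis by simp
qed

lemma rot_zero:
  fixes l k c :: complex
  assumes a: "Re l > 0" and b: "Im l \<noteq> 0"
    and H: "\<And>x. x > 0 \<Longrightarrow> cis (Re (k * exp (- l * complex_of_real x))) = c"
  shows "k = 0"
proof -
  define \<rho> where "\<rho> = 2*pi/\<bar>Im l\<bar>"
  have rho: "\<rho> > 0" using b by (simp add: \<rho>_def)
  define q where "q = exp (- Re l * \<rho>)"
  have q: "0 < q" "q < 1" using a rho by (auto simp: q_def)
  have cb: "cis (- Im l * \<rho>) = 1"
  proof (cases "Im l > 0")
    case True
    then have "- Im l * \<rho> = - (2*pi)" by (simp add: \<rho>_def)
    then show ?thesis by (simp add: complex_eq_iff)
  next
    case False
    then have "- Im l * \<rho> = 2*pi" using b by (simp add: \<rho>_def)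
    then show ?thesis by (simp add: complex_eq_iff)
  qed
  have e1: "exp (- l * complex_of_real \<rho>) = complex_of_real q"
    using cb by (simp add: exp_eq_polar q_def)
  define w where "w = exp (- l * complex_of_real (\<rho>/4))"
  have "\<exists>s::real. s \<noteq> 0 \<and> w = complex_of_real s * \<i>"
  proof (cases "Im l > 0")
    case True
    then have "- Im l * (\<rho>/4) = - (pi/2)" by (simp add: \<rho>_def)
    then have "cis (- Im l * (\<rho>/4)) = - \<i>" unfolding \<open>- Im l * (\<rho>/4) = - (pi/2)\<close> by (simp add: complex_eq_iff)
    then show ?thesis by (intro exI[of _ "- exp (- Re l * (\<rho>/4))"]) (use \<open>cis (- Im l * (\<rho>/4)) = _\<close> in \<open>simp add: w_def exp_eq_polar\<close>)
  next
    case False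
    then have "- Im l * (\<rho>/4) = pi/2" using b by (simp add: \<rho>_def)
    then have "cis (- Im l * (\<rho>/4)) = \<i>" unfolding \<open>- Im l * (\<rho>/4) = pi/2\<close> by (simp add: complex_eq_iff)
    then show ?thesis by (intro exI[of _ "exp (- Re l * (\<rho>/4))"]) (use \<open>cis (- Im l * (\<rho>/4)) = _\<close> in \<open>simp add: w_def exp_eq_polar\<close>)
  qed
  then obtain s where s: "s \<noteq> 0" "w = complex_of_real s * \<i>" by blast
  have pw: "exp (- l * complex_of_real (real N * \<rho>)) = complex_of_real (q ^ N)" for N
  proof -
    have "exp (- l * complex_of_real (real N * \<rho>)) = exp (of_nat N * (- l * complex_of_real \<rho>))"
      by (simp add: algebra_simps)
    also have "\<dots> = exp (- l * complex_of_real \<rho>) ^ N" by (rule exp_of_nat_mult)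
    finally show ?thesis using e1 by simp
  qed
  have pw2: "exp (- l * complex_of_real (real N * \<rho> + \<rho>/4)) = complex_of_real (q ^ N) * w" for N
  proof -
    have "exp (- l * complex_of_real (real N * \<rho> + \<rho>/4)) =
        exp (- l * complex_of_real (real N * \<rho>) + - l * complex_of_real (\<rho>/4))"
      by (simp add: algebra_simps)
    also have "\<dots> = exp (- l * complex_of_real (real N * \<rho>)) * w" by (simp only: exp_add w_def)
    also have "\<dots> = complex_of_real (q ^ N) * w" by (simp only: pw)
    finally show ?thesis .
  qed
  have A1: "Re k = 0 \<and> c = 1"
  proof (rule geom_cis[OF q])
    fix N :: nat assume "N \<ge> 1"
    then have "real N * \<rho> > 0" using rho by simp
    from H[OF this] show "cis (q^N * Re k) = c" unfolding pw by (simp add: mult.commute)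
  qed
  have A2: "Re (k * w) = 0 \<and> c = 1"
  proof (rule geom_cis[OF q])
    fix N :: nat assume "N \<ge> 1"
    then have "real N * \<rho> + \<rho>/4 > 0" using rho by (simp add: add_pos_pos)
    from H[OF this] show "cis (q^N * Re (k * w)) = c" unfolding pw2 by (simp add: algebra_simps)
  qed
  have "Im k = 0" using A2 s by simp
  with A1 show ?thesis by (simp add: complex_eq_iff)
qed



lemma borel_measurable_cis[measurable]:
  fixes f :: "'a \<Rightarrow> real"
  assumes [measurable]: "f \<in> borel_measurable M"
  shows "(\<lambda>x. cis (f x)) \<in> borel_measurable M"
proof -
  have "cis \<in> borel_measurable borel"
    by (intro borel_measurable_continuous_onI continuous_intros)
  from measurable_compose[OF assms this] show ?thesis by (simp add: comp_def)
qed

lemma AE_lborel_pos_all: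
  fixes h :: "real \<Rightarrow> complex"
  assumes AE: "AE x in lborel. 0 < x \<longrightarrow> h x = c" and cont: "continuous_on {0<..} h"
  shows "\<And>x. x > 0 \<Longrightarrow> h x = c"
proof (rule ccontr)
  fix x0 :: real assume x0: "x0 > 0" "h x0 \<noteq> c"
  have "open (h -` (- {c}) \<inter> {0<..})"
    using cont continuous_on_open_vimage[of "{0<..}" h] by auto
  moreover have "x0 \<in> h -` (- {c}) \<inter> {0<..}" using x0 by auto
  ultimately obtain e where e: "e > 0" "ball x0 e \<subseteq> h -` (- {c}) \<inter> {0<..}"
    using open_contains_ball by blast
  have "AE x in lborel. x \<notin> ball x0 e" using AE by eventually_elim (use e in auto)
  then have "emeasure lborel (ball x0 e) = 0"
    by (subst AE_iff_measurable[symmetric, where P="\<lambda>x. x \<notin> ball x0 e"]) auto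
  moreover have "emeasure lborel (ball x0 e) = ennreal (2*e)"
    using e(1) by (simp add: ball_eq_greaterThanLessThan)
  ultimately show False using e(1) by simp
qed

lemma char_fun_C_norm:
  assumes "prob_space M" "Z \<in> borel_measurable M"
  shows "cmod (char_fun_C M Z t) \<le> 1"
proof -
  interpret prob_space M by fact
  have "cmod (char_fun_C M Z t) \<le> (\<integral>\<omega>. norm (cis (Re (cnj t * Z \<omega>))) \<partial>M)"
    unfolding char_fun_C_def by (rule integral_norm_bound)
  also have "\<dots> = 1" by (simp add: prob_space)
  finally show ?thesis .
qed

lemma char_fun_C_isCont:
  assumes "prob_space M" and [measurable]: "Z \<in> borel_measurable M"
  shows "isCont (char_fun_C M Z) t"
  unfolding continuous_at_sequentially
proof safe
  interpret prob_space M by fact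
  fix X assume X: "X \<longlonglongrightarrow> t"
  show "(char_fun_C M Z \<circ> X) \<longlonglongrightarrow> char_fun_C M Z t"
    unfolding comp_def char_fun_C_def
    by (rule integral_dominated_convergence[where w="\<lambda>_. 1"]) (auto intro!: tendsto_intros X)
qed

lemma char_fun_C_one:
  assumes "prob_space M" and [measurable]: "Z \<in> borel_measurable M"
    and n1: "cmod (char_fun_C M Z t) = 1"
  shows "AE \<omega> in M. cis (Re (cnj t * Z \<omega>)) = char_fun_C M Z t"
proof -
  interpret prob_space M by fact
  define c where "c = char_fun_C M Z t"
  have c1: "cnj c * c = 1" using n1 unfolding c_def
    by (metis complex_norm_square mult.commute of_real_1 power_one)
  have int: "integrable M (\<lambda>\<omega>. cis (Re (cnj t * Z \<omega>)))"
    by (rule integrable_const_bound[where B=1]) auto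
  have int2: "integrable M (\<lambda>\<omega>. 1 - Re (cnj c * cis (Re (cnj t * Z \<omega>))))"
    using int by (intro Bochner_Integration.integrable_diff integrable_Re integrable_mult_right) auto
  have "(\<integral>\<omega>. 1 - Re (cnj c * cis (Re (cnj t * Z \<omega>))) \<partial>M) = 1 - Re (cnj c * c)"
  proof -
    have i3: "integrable M (\<lambda>\<omega>. cnj c * cis (Re (cnj t * Z \<omega>)))" using int by auto
    have "(\<integral>\<omega>. 1 - Re (cnj c * cis (Re (cnj t * Z \<omega>))) \<partial>M)
        = (\<integral>\<omega>. 1 \<partial>M) - (\<integral>\<omega>. Re (cnj c * cis (Re (cnj t * Z \<omega>))) \<partial>M)"
      by (rule Bochner_Integration.integral_diff) (use i3 integrable_Re in blast)+
    also have "(\<integral>\<omega>. Re (cnj c * cis (Re (cnj t * Z \<omega>))) \<partial>M) = Re (\<integral>\<omega>. cnj c * cis (Re (cnj t * Z \<omega>)) \<partial>M)"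
      by (rule integral_Re[OF i3])
    also have "(\<integral>\<omega>. cnj c * cis (Re (cnj t * Z \<omega>)) \<partial>M) = cnj c * c"
      by (simp only: integral_mult_right_zero c_def char_fun_C_def)
    finally show ?thesis by (simp add: prob_space)
  qed
  also have "\<dots> = 0" using c1 by simp
  finally have "AE \<omega> in M. 1 - Re (cnj c * cis (Re (cnj t * Z \<omega>))) = 0"
    using integral_nonneg_eq_0_iff_AE[OF int2] by (metis (no_types, lifting) AE_I2 complex_Re_le_cmod diff_ge_0_iff_ge
        norm_cis norm_mult complex_mod_cnj n1 c_def mult_1 order_trans)
  then show ?thesis
  proof eventually_elim
    case (elim \<omega>)
    define u where "u = cnj c * cis (Re (cnj t * Z \<omega>))"
    have "cmod u = 1" using n1 by (simp add: u_def c_def norm_mult)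
    moreover have "Re u = 1" using elim by (simp add: u_def)
    ultimately have "Im u = 0" by (metis cmod_power2 power_one add_cancel_left_right zero_eq_power2 one_power2)
    then have "u = 1" using \<open>Re u = 1\<close> by (simp add: complex_eq_iff)
    have "cis (Re (cnj t * Z \<omega>)) = (cnj c * c) * cis (Re (cnj t * Z \<omega>))" using c1 by simp
    also have "\<dots> = c * u" by (simp add: u_def)
    finally show ?case using \<open>u = 1\<close> by (simp add: c_def)
  qed
qed



lemma expdens_int:
  assumes L: "L > 0"
  shows "integrable lborel (exponential_density L)" "integral\<^sup>L lborel (exponential_density L) = 1"
proof -
  interpret P: prob_space "density lborel (exponential_density L)"
    using prob_space_exponential_density[OF L] .
  have m: "exponential_density L \<in> borel_measurable lborel" by measurable
  have nn: "AE x in lborel. 0 \<le> exponential_density L x" using L by (auto intro!: exponential_density_nonneg)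
  have "integrable (density lborel (exponential_density L)) (\<lambda>_. 1::real)" by simp
  then show "integrable lborel (exponential_density L)"
    using integrable_real_density[OF m nn, of "\<lambda>_. 1"] by simp
  have "integral\<^sup>L (density lborel (exponential_density L)) (\<lambda>_. 1::real) = P.prob (space (density lborel (exponential_density L)))" by simp
  then have "integral\<^sup>L (density lborel (exponential_density L)) (\<lambda>_. 1::real) = 1" using P.prob_space by simp
  then show "integral\<^sup>L lborel (exponential_density L) = 1"
    using integral_real_density[OF m nn, of "\<lambda>_. 1"] by simp
qed

lemma expdens_laplace:
  assumes l: "l > 0" and a: "a > 0"
  shows "integrable lborel (\<lambda>x. exponential_density l x * exp (- a * x))"
    "(\<integral>x. exponential_density l x * exp (- a * x) \<partial>lborel) = l / (l + a)"
proof -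
  have eq: "(\<lambda>x. exponential_density l x * exp (- a * x)) = (\<lambda>x. (l / (l + a)) * exponential_density (l + a) x)"
  proof
    fix x :: real
    show "exponential_density l x * exp (- a * x) = (l / (l + a)) * exponential_density (l + a) x"
    proof -
      have e: "exp (- x * l) * exp (- a * x) = exp (- x * (l + a))" by (simp add: exp_add[symmetric] algebra_simps)
      show ?thesis using l a e by (simp add: exponential_density_def field_simps)
    qed
  qed
  have lp: "l + a > 0" using l a by simp
  show "integrable lborel (\<lambda>x. exponential_density l x * exp (- a * x))"
    unfolding eq using expdens_int(1)[OF lp] by simp
  show "(\<integral>x. exponential_density l x * exp (- a * x) \<partial>lborel) = l / (l + a)"
    unfolding eq using expdens_int(2)[OF lp] by simp
qed

lemma prod_ineq:
  fixes a :: real assumes a: "a > 0" "a \<noteq> 1" and n: "n \<ge> 1"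
  shows "(\<Prod>j\<in>{1..n}. real j / (real j + a)) * real (n + 1) \<noteq> 1"
proof -
  have "(1 < a \<longrightarrow> (\<Prod>j\<in>{1..n}. real j / (real j + a)) < 1 / real (n + 1)) \<and>
        (a < 1 \<longrightarrow> (\<Prod>j\<in>{1..n}. real j / (real j + a)) > 1 / real (n + 1))"
    using n
  proof (induction n rule: dec_induct)
    case base
    then show ?case using a by (auto simp: field_simps)
  next
    case (step n)
    have pos: "(\<Prod>j\<in>{1..n}. real j / (real j + a)) > 0" using a by (intro prod_pos) auto
    have sp: "(\<Prod>j\<in>{1..Suc n}. real j / (real j + a)) = (\<Prod>j\<in>{1..n}. real j / (real j + a)) * ((n+1) / (n+1+a))"
      by (simp add: prod.nat_ivl_Suc' ) 
    show ?case
    proof (intro conjI impI)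
      assume "1 < a"
      then have h: "(\<Prod>j\<in>{1..n}. real j / (real j + a)) < 1 / real (n + 1)" using step.IH by simp
      have "(n+1) / (n+1+a) < (n+1) / (n+2 :: real)" using \<open>1 < a\<close> by (intro divide_strict_left_mono) auto
      then have "(\<Prod>j\<in>{1..n}. real j / (real j + a)) * ((n+1) / (n+1+a)) < 1 / real (n + 1) * ((n+1) / (n+2))"
        using h pos a by (intro mult_strict_mono) auto
      then show "(\<Prod>j\<in>{1..Suc n}. real j / (real j + a)) < 1 / real (Suc n + 1)" using sp by simp
    next
      assume "a < 1"
      then have h: "(\<Prod>j\<in>{1..n}. real j / (real j + a)) > 1 / real (n + 1)" using step.IH by simp
      have "(n+1) / (n+1+a) > (n+1) / (n+2 :: real)" using \<open>a < 1\<close> a by (intro divide_strict_left_mono) auto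
      then have "(\<Prod>j\<in>{1..n}. real j / (real j + a)) * ((n+1) / (n+1+a)) > 1 / real (n + 1) * ((n+1) / (n+2))"
        using h pos a by (intro mult_strict_mono) auto
      then show "(\<Prod>j\<in>{1..Suc n}. real j / (real j + a)) > 1 / real (Suc n + 1)" using sp by simp
    qed
  qed
  then show ?thesis using a by (cases "a < 1") (auto simp: field_simps)
qed

lemma psi_lt1:
  assumes "prob_space M" "Z \<in> borel_measurable M"
    and H: "\<And>t. t \<noteq> 0 \<Longrightarrow> cmod (char_fun_C M Z t) \<noteq> 1"
  shows "\<forall>r>0. psi_C M Z r < 1"
proof (intro allI impI)
  fix r :: real assume r: "r > 0"
  define S where "S = {t::complex. cmod t = r}"
  have "S = sphere 0 r" by (auto simp: S_def)
  then have cS: "compact S" by simp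
  have neS: "S \<noteq> {}" using r by (auto simp: S_def intro!: exI[of _ "complex_of_real r"])
  have cont: "continuous_on S (\<lambda>t. cmod (char_fun_C M Z t))"
    by (intro continuous_at_imp_continuous_on ballI isCont_norm char_fun_C_isCont assms)
  obtain x where x: "x \<in> S" "\<And>y. y \<in> S \<Longrightarrow> cmod (char_fun_C M Z y) \<le> cmod (char_fun_C M Z x)"
    using continuous_attains_sup[OF cS neS cont] by blast
  have "psi_C M Z r = cmod (char_fun_C M Z x)"
    unfolding psi_C_def S_def[symmetric] by (rule cSup_eq_maximum) (use x in auto)
  moreover have "x \<noteq> 0" using x(1) r by (auto simp: S_def)
  ultimately show "psi_C M Z r < 1"
    using H[of x] char_fun_C_norm[OF assms(1,2), of x] by simp
qed



theorem lemma7p2: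
  fixes M :: "'a measure" and m :: nat and lam :: complex
    and tau :: "nat \<Rightarrow> 'a \<Rightarrow> real" and T :: "'a \<Rightarrow> real"
    and Zs :: "nat \<Rightarrow> 'a \<Rightarrow> complex" and Z :: "'a \<Rightarrow> complex"
  assumes "prob_space M"
    and "m \<ge> 2"
    and "lam \<noteq> 1" and "Re lam > 0"
    and "\<And>j. j \<in> {1..<m} \<Longrightarrow> distributed M lborel (tau j) (exponential_density (real j))"
    and "\<And>\<omega>. T \<omega> = (\<Sum>j\<in>{1..<m}. tau j \<omega>)"
    and "prob_space.indep_vars M (\<lambda>_. borel)
           (\<lambda>k \<omega>. case k of Inl j \<Rightarrow> complex_of_real (tau j \<omega>) | Inr i \<Rightarrow> Zs i \<omega>)
           (Inl ` {1..<m} \<union> Inr ` {1..m})"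
    and "Z \<in> borel_measurable M"
    and "\<And>i. i \<in> {1..m} \<Longrightarrow> distr M borel (Zs i) = distr M borel Z"
    and "integrable M Z"
    and "(\<integral>\<omega>. Z \<omega> \<partial>M) \<noteq> 0"
    and "distr M borel Z = distr M borel (\<lambda>\<omega>. exp (- lam * complex_of_real (T \<omega>)) * (\<Sum>i\<in>{1..m}. Zs i \<omega>))"
  shows "\<forall>r>0. psi_C M Z r < 1"
proof -
  interpret prob_space M by fact
  define I :: "(nat + nat) set" where "I = Inl ` {1..<m} \<union> Inr ` {1..m}"
  define X where "X = (\<lambda>k \<omega>. case k of Inl j \<Rightarrow> complex_of_real (tau j \<omega>) | Inr i \<Rightarrow> Zs i \<omega>)"
  have ind: "indep_vars (\<lambda>_. borel) X I" using assms(7) by (simp add: X_def I_def)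
  have rvX: "X k \<in> borel_measurable M" if "k \<in> I" for k
    using ind that by (auto simp: indep_vars_def)
  have tau_m: "tau j \<in> borel_measurable M" if "j \<in> {1..<m}" for j
    using distributed_measurable[OF assms(5)[OF that]] by simp
  have Zs_m: "Zs i \<in> borel_measurable M" if "i \<in> {1..m}" for i
    using rvX[of "Inr i"] that by (simp add: X_def I_def)
  have Tdef: "T = (\<lambda>\<omega>. \<Sum>j\<in>{1..<m}. tau j \<omega>)" using assms(6) by auto
  have T_m[measurable]: "T \<in> borel_measurable M"
    unfolding Tdef by (intro borel_measurable_sum tau_m)
  define S where "S = (\<lambda>\<omega>. \<Sum>i\<in>{1..m}. Zs i \<omega>)"
  have S_m[measurable]: "S \<in> borel_measurable M"
    unfolding S_def by (intro borel_measurable_sum Zs_m)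
  define W where "W = (\<lambda>\<omega>. exp (- lam * complex_of_real (T \<omega>)) * S \<omega>)"
  have W_m[measurable]: "W \<in> borel_measurable M" unfolding W_def by measurable
  have Z_m[measurable]: "Z \<in> borel_measurable M" by fact
  have distrW: "distr M borel Z = distr M borel W" using assms(12) by (simp add: W_def S_def)
  have EZW: "(\<integral>\<omega>. Z \<omega> \<partial>M) = (\<integral>\<omega>. W \<omega> \<partial>M)"
  proof -
    have "(\<integral>\<omega>. Z \<omega> \<partial>M) = (\<integral>z. z \<partial>distr M borel Z)" by (simp add: integral_distr)
    also have "\<dots> = (\<integral>z. z \<partial>distr M borel W)" by (simp add: distrW)
    also have "\<dots> = (\<integral>\<omega>. W \<omega> \<partial>M)" by (simp add: integral_distr)
    finally show ?thesis .
  qed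
  have imlam: "Im lam \<noteq> 0"
  proof
    assume im0: "Im lam = 0"
    define a where "a = Re lam"
    have lam_eq: "lam = complex_of_real a" using im0 by (simp add: a_def complex_eq_iff)
    have a0: "a > 0" "a \<noteq> 1"
    proof -
      show "a > 0" using assms(4) by (simp add: a_def)
      show "a \<noteq> 1"
      proof
        assume "a = 1"
        then have "lam = 1" using lam_eq by simp
        with assms(3) show False by simp
      qed
    qed
    have Ej: "integrable M (\<lambda>\<omega>. exp (- a * tau j \<omega>)) \<and> (\<integral>\<omega>. exp (- a * tau j \<omega>) \<partial>M) = real j / (real j + a)"
      if j: "j \<in> {1..<m}" for j
    proof -
      have jp: "real j > 0" using j by simp
      have nn: "\<And>x. 0 \<le> exponential_density (real j) x" using jp exponential_density_nonneg by blast
      have "integrable M (\<lambda>\<omega>. exp (- a * tau j \<omega>))"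
        using distributed_integrable[OF assms(5)[OF j], of "\<lambda>x. exp (- a * x)"] expdens_laplace(1)[OF jp a0(1)] nn
        by simp
      moreover have "(\<integral>\<omega>. exp (- a * tau j \<omega>) \<partial>M) = real j / (real j + a)"
        using distributed_integral[OF assms(5)[OF j], of "\<lambda>x. exp (- a * x)"] expdens_laplace(2)[OF jp a0(1)] nn
        by simp
      ultimately show ?thesis by simp
    qed
    have ee: "exp (- lam * complex_of_real x) = complex_of_real (exp (- a * x))" for x
    proof -
      have "- lam * complex_of_real x = complex_of_real (- a * x)" by (simp add: lam_eq)
      then show ?thesis by (simp only: exp_of_real)
    qed
    define E where "E = (\<lambda>\<omega>. exp (- lam * complex_of_real (T \<omega>)))"
    have indE: "indep_vars (\<lambda>_. borel) (\<lambda>k \<omega>. exp (- lam * X k \<omega>)) (Inl ` {1..<m})"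
      by (rule indep_vars_compose2[OF indep_vars_subset[OF ind]]) (auto simp: I_def)
    have Eprod: "E \<omega> = (\<Prod>k\<in>Inl ` {1..<m}. exp (- lam * X k \<omega>))" for \<omega>
    proof -
      have "(\<Prod>k\<in>Inl ` {1..<m}. exp (- lam * X k \<omega>)) = (\<Prod>j\<in>{1..<m}. exp (- lam * complex_of_real (tau j \<omega>)))"
        by (subst prod.reindex) (auto simp: X_def)
      also have "\<dots> = exp (\<Sum>j\<in>{1..<m}. - lam * complex_of_real (tau j \<omega>))"
        by (simp add: exp_sum)
      also have "\<dots> = E \<omega>" by (simp add: E_def Tdef sum_distrib_left)
      finally show ?thesis by simp
    qed
    have intk: "integrable M (\<lambda>\<omega>. exp (- lam * X k \<omega>))" if "k \<in> Inl ` {1..<m}" for k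
    proof -
      from that obtain j where j: "j \<in> {1..<m}" "k = Inl j" by auto
      have "integrable M (\<lambda>\<omega>. complex_of_real (exp (- a * tau j \<omega>)))"
        using Ej[OF j(1)] by simp
      then show ?thesis by (simp only: j X_def sum.case ee)
    qed
    have E_int: "integrable M E" and E_exp: "(\<integral>\<omega>. E \<omega> \<partial>M) = (\<Prod>j\<in>{1..<m}. complex_of_real (real j / (real j + a)))"
    proof -
      have Eeq: "E = (\<lambda>\<omega>. \<Prod>k\<in>Inl ` {1..<m}. exp (- lam * X k \<omega>))" using Eprod by auto
      moreover have "integrable M (\<lambda>\<omega>. \<Prod>k\<in>Inl ` {1..<m}. exp (- lam * X k \<omega>))"
        by (rule indep_vars_integrable[OF _ indE intk]) auto
      ultimately show "integrable M E" by simp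
      have "(\<integral>\<omega>. E \<omega> \<partial>M) = (\<Prod>k\<in>Inl ` {1..<m}. \<integral>\<omega>. exp (- lam * X k \<omega>) \<partial>M)"
        unfolding Eeq by (rule indep_vars_lebesgue_integral[OF _ indE intk]) auto
      also have "\<dots> = (\<Prod>j\<in>{1..<m}. \<integral>\<omega>. exp (- lam * complex_of_real (tau j \<omega>)) \<partial>M)"
        by (subst prod.reindex) (auto simp: X_def)
      also have "\<dots> = (\<Prod>j\<in>{1..<m}. complex_of_real (real j / (real j + a)))"
      proof (rule prod.cong[OF refl])
        fix j assume j: "j \<in> {1..<m}"
        have "(\<integral>\<omega>. exp (- lam * complex_of_real (tau j \<omega>)) \<partial>M) = (\<integral>\<omega>. complex_of_real (exp (- a * tau j \<omega>)) \<partial>M)"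
          by (simp only: ee)
        also have "\<dots> = complex_of_real (real j / (real j + a))" using Ej[OF j] by simp
        finally show "(\<integral>\<omega>. exp (- lam * complex_of_real (tau j \<omega>)) \<partial>M) = complex_of_real (real j / (real j + a))" .
      qed
      finally show "(\<integral>\<omega>. E \<omega> \<partial>M) = (\<Prod>j\<in>{1..<m}. complex_of_real (real j / (real j + a)))" .
    qed
    define A :: "(nat + nat) set" where "A = Inl ` {1..<m}"
    define B :: "(nat + nat) set" where "B = Inr ` {1..m}"
    have iv: "indep_var (PiM A (\<lambda>_. borel)) (\<lambda>\<omega>. restrict (\<lambda>i. X i \<omega>) A) (PiM B (\<lambda>_. borel)) (\<lambda>\<omega>. restrict (\<lambda>i. X i \<omega>) B)"
      by (rule indep_var_restrict[OF ind]) (auto simp: A_def B_def I_def)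
    define g1 where "g1 = (\<lambda>f::nat+nat \<Rightarrow> complex. exp (- lam * (\<Sum>j\<in>{1..<m}. f (Inl j))))"
    define g2 where "g2 = (\<lambda>f::nat+nat \<Rightarrow> complex. (\<Sum>i\<in>{1..m}. f (Inr i)))"
    have s1[measurable]: "(\<lambda>f::nat+nat \<Rightarrow> complex. \<Sum>j\<in>{1..<m}. f (Inl j)) \<in> borel_measurable (PiM A (\<lambda>_. borel))"
      by (rule borel_measurable_sum, rule measurable_component_singleton) (auto simp: A_def)
    have g1m: "g1 \<in> borel_measurable (PiM A (\<lambda>_. borel))" unfolding g1_def by measurable
    have g2m: "g2 \<in> borel_measurable (PiM B (\<lambda>_. borel))" unfolding g2_def
      by (rule borel_measurable_sum, rule measurable_component_singleton) (auto simp: B_def)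
    have ivES: "indep_var borel E borel S"
    proof -
      have "indep_var borel (g1 \<circ> (\<lambda>\<omega>. restrict (\<lambda>i. X i \<omega>) A)) borel (g2 \<circ> (\<lambda>\<omega>. restrict (\<lambda>i. X i \<omega>) B))"
        by (rule indep_var_compose[OF iv g1m g2m])
      moreover have "g1 \<circ> (\<lambda>\<omega>. restrict (\<lambda>i. X i \<omega>) A) = E"
        by (auto simp: fun_eq_iff g1_def E_def A_def X_def Tdef intro!: arg_cong[where f=exp] sum.cong)
      moreover have "g2 \<circ> (\<lambda>\<omega>. restrict (\<lambda>i. X i \<omega>) B) = S"
        by (auto simp: fun_eq_iff g2_def B_def X_def S_def intro!: sum.cong)
      ultimately show ?thesis by simp
    qed
    have Zs_int: "integrable M (Zs i) \<and> (\<integral>\<omega>. Zs i \<omega> \<partial>M) = (\<integral>\<omega>. Z \<omega> \<partial>M)" if i: "i \<in> {1..m}" for i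
    proof -
      have Zm[measurable]: "Zs i \<in> borel_measurable M" using Zs_m[OF i] .
      have "integrable (distr M borel Z) (\<lambda>z. z)" using assms(10) by (simp add: integrable_distr_eq)
      then have "integrable (distr M borel (Zs i)) (\<lambda>z. z)" using assms(9)[OF i] by simp
      then have "integrable M (Zs i)" by (simp add: integrable_distr_eq)
      moreover have "(\<integral>\<omega>. Zs i \<omega> \<partial>M) = (\<integral>\<omega>. Z \<omega> \<partial>M)"
      proof -
        have "(\<integral>\<omega>. Zs i \<omega> \<partial>M) = (\<integral>z. z \<partial>distr M borel (Zs i))" by (simp add: integral_distr)
        also have "\<dots> = (\<integral>z. z \<partial>distr M borel Z)" using assms(9)[OF i] by simp
        also have "\<dots> = (\<integral>\<omega>. Z \<omega> \<partial>M)" by (simp add: integral_distr)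
        finally show ?thesis .
      qed
      ultimately show ?thesis by simp
    qed
    have S_int: "integrable M S" unfolding S_def using Zs_int by (intro Bochner_Integration.integrable_sum) auto
    have ES: "(\<integral>\<omega>. S \<omega> \<partial>M) = of_nat m * (\<integral>\<omega>. Z \<omega> \<partial>M)"
      unfolding S_def using Zs_int by (subst Bochner_Integration.integral_sum) auto
    have "(\<integral>\<omega>. W \<omega> \<partial>M) = (\<integral>\<omega>. E \<omega> \<partial>M) * (\<integral>\<omega>. S \<omega> \<partial>M)"
      using indep_var_lebesgue_integral[OF ivES E_int S_int] by (simp add: W_def E_def)
    then have "(\<integral>\<omega>. Z \<omega> \<partial>M) = (\<Prod>j\<in>{1..<m}. complex_of_real (real j / (real j + a))) * of_nat m * (\<integral>\<omega>. Z \<omega> \<partial>M)"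
      using EZW E_exp ES by simp
    then have "(\<Prod>j\<in>{1..<m}. complex_of_real (real j / (real j + a))) * of_nat m = 1"
      using assms(11) by (metis mult_cancel_right1)
    then have "complex_of_real ((\<Prod>j\<in>{1..<m}. real j / (real j + a)) * real m) = 1" by simp
    then have h: "(\<Prod>j\<in>{1..<m}. real j / (real j + a)) * real m = 1" using of_real_eq_1_iff by blast
    have "{1..<m} = {1..m-1}" using assms(2) by auto
    moreover have "m = (m - 1) + 1" using assms(2) by simp
    ultimately have "(\<Prod>j\<in>{1..m-1}. real j / (real j + a)) * real ((m-1) + 1) = 1" using h by simp
    moreover have "m - 1 \<ge> 1" using assms(2) by simp
    ultimately show False using prod_ineq[OF a0] by blast
  qed
  have "cmod (char_fun_C M Z t) \<noteq> 1" if t0: "t \<noteq> 0" for t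
  proof
    assume n1: "cmod (char_fun_C M Z t) = 1"
    define c where "c = char_fun_C M Z t"
    define P where "P = (\<lambda>z::complex. cis (Re (cnj t * z)) = c)"
    have Pm: "{z \<in> space borel. P z} \<in> sets borel" unfolding P_def by measurable
    have AEZ: "AE \<omega> in M. P (Z \<omega>)" using char_fun_C_one[OF assms(1,8) n1] by (simp add: P_def c_def)
    have AEW: "AE \<omega> in M. P (W \<omega>)"
    proof -
      have "AE z in distr M borel Z. P z" using AEZ AE_distr_iff[OF Z_m Pm] by simp
      then have "AE z in distr M borel W. P z" unfolding distrW .
      then show ?thesis using AE_distr_iff[OF W_m Pm] by simp
    qed
    define A :: "(nat + nat) set" where "A = Inl ` {2..<m} \<union> Inr ` {1..m}"
    define B :: "(nat + nat) set" where "B = {Inl 1}"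
    have iv: "indep_var (PiM A (\<lambda>_. borel)) (\<lambda>\<omega>. restrict (\<lambda>i. X i \<omega>) A) (PiM B (\<lambda>_. borel)) (\<lambda>\<omega>. restrict (\<lambda>i. X i \<omega>) B)"
      by (rule indep_var_restrict[OF ind]) (use assms(2) in \<open>auto simp: A_def B_def I_def\<close>)
    define g1 where "g1 = (\<lambda>f::nat+nat \<Rightarrow> complex. exp (- lam * (\<Sum>j\<in>{2..<m}. f (Inl j))) * (\<Sum>i\<in>{1..m}. f (Inr i)))"
    define g2 where "g2 = (\<lambda>f::nat+nat \<Rightarrow> complex. f (Inl 1))"
    have s1[measurable]: "(\<lambda>f::nat+nat \<Rightarrow> complex. \<Sum>j\<in>{2..<m}. f (Inl j)) \<in> borel_measurable (PiM A (\<lambda>_. borel))"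
      by (rule borel_measurable_sum, rule measurable_component_singleton) (auto simp: A_def)
    have s2[measurable]: "(\<lambda>f::nat+nat \<Rightarrow> complex. \<Sum>i\<in>{1..m}. f (Inr i)) \<in> borel_measurable (PiM A (\<lambda>_. borel))"
      by (rule borel_measurable_sum, rule measurable_component_singleton) (auto simp: A_def)
    have g1m: "g1 \<in> borel_measurable (PiM A (\<lambda>_. borel))" unfolding g1_def by measurable
    have s3[measurable]: "(\<lambda>f::nat+nat \<Rightarrow> complex. f (Inl 1)) \<in> borel_measurable (PiM B (\<lambda>_. borel))"
      by (rule measurable_component_singleton) (simp add: B_def)
    have g2m: "g2 \<in> borel_measurable (PiM B (\<lambda>_. borel))" unfolding g2_def by measurable
    define Y where "Y = (\<lambda>\<omega>. exp (- lam * complex_of_real (\<Sum>j\<in>{2..<m}. tau j \<omega>)) * S \<omega>)"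
    define V where "V = (\<lambda>\<omega>. complex_of_real (tau 1 \<omega>))"
    have iv2: "indep_var borel Y borel V"
    proof -
      have "indep_var borel (g1 \<circ> (\<lambda>\<omega>. restrict (\<lambda>i. X i \<omega>) A)) borel (g2 \<circ> (\<lambda>\<omega>. restrict (\<lambda>i. X i \<omega>) B))"
        by (rule indep_var_compose[OF iv g1m g2m])
      moreover have "g1 \<circ> (\<lambda>\<omega>. restrict (\<lambda>i. X i \<omega>) A) = Y"
        by (auto simp: fun_eq_iff g1_def Y_def A_def X_def S_def intro!: sum.cong arg_cong2[where f="(*)"])
      moreover have "g2 \<circ> (\<lambda>\<omega>. restrict (\<lambda>i. X i \<omega>) B) = V" by (auto simp: fun_eq_iff g2_def B_def X_def V_def)
      ultimately show ?thesis by simp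
    qed
    have m1: "1 \<in> {1..<m}" using assms(2) by simp
    have Weq: "W \<omega> = exp (- lam * complex_of_real (tau 1 \<omega>)) * Y \<omega>" for \<omega>
    proof -
      have "{1..<m} = insert 1 {2..<m}" using assms(2) by auto
      then have Teq: "T \<omega> = tau 1 \<omega> + (\<Sum>j\<in>{2..<m}. tau j \<omega>)" unfolding Tdef by simp
      have e: "exp (- lam * complex_of_real (T \<omega>)) = exp (- lam * complex_of_real (tau 1 \<omega>) + - lam * complex_of_real (\<Sum>j\<in>{2..<m}. tau j \<omega>))"
        by (rule arg_cong[where f=exp]) (simp add: Teq algebra_simps)
      show ?thesis by (simp only: W_def Y_def e exp_add mult.assoc)
    qed
    define Q where "Q = (\<lambda>y v. P (exp (- lam * v) * y))"
    have AEQ: "AE \<omega> in M. Q (Y \<omega>) (V \<omega>)" using AEW by (simp add: Q_def Weq V_def)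
    have Y_m[measurable]: "Y \<in> borel_measurable M" using iv2 by (blast dest: indep_var_rv1)
    have t1_m[measurable]: "tau 1 \<in> borel_measurable M" using tau_m[OF m1] .
    have V_m[measurable]: "V \<in> borel_measurable M" unfolding V_def by measurable
    have jd: "distr M borel Y \<Otimes>\<^sub>M distr M borel V = distr M (borel \<Otimes>\<^sub>M borel) (\<lambda>\<omega>. (Y \<omega>, V \<omega>))"
      using iv2 indep_var_distribution_eq by blast
    interpret PY: prob_space "distr M borel Y" by (rule prob_space_distr) simp
    interpret PT: prob_space "distr M borel V" by (rule prob_space_distr) simp
    interpret PP: pair_prob_space "distr M borel Y" "distr M borel V" ..
    have Qm: "{p \<in> space (distr M borel Y \<Otimes>\<^sub>M distr M borel V). Q (fst p) (snd p)} \<in> sets (distr M borel Y \<Otimes>\<^sub>M distr M borel V)"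
      unfolding Q_def P_def by measurable
    have Qm2: "{p \<in> space (borel \<Otimes>\<^sub>M borel). Q (fst p) (snd p)} \<in> sets (borel \<Otimes>\<^sub>M (borel :: complex measure))"
      unfolding Q_def P_def by measurable
    have "AE p in distr M (borel \<Otimes>\<^sub>M borel) (\<lambda>\<omega>. (Y \<omega>, V \<omega>)). Q (fst p) (snd p)"
      by (subst AE_distr_iff) (use AEQ Qm2 in auto)
    then have "AE p in distr M borel Y \<Otimes>\<^sub>M distr M borel V. Q (fst p) (snd p)" unfolding jd .
    then have AE2: "AE y in distr M borel Y. AE x in distr M borel V. Q y x"
      using PP.AE_pair_iff[OF Qm] by simp
    have d1: "distr M borel (tau 1) = density lborel (exponential_density 1)"
    proof -
      have "distr M borel (tau 1) = distr M lborel (tau 1)" by (rule distr_cong) auto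
      also have "\<dots> = density lborel (exponential_density 1)"
        using distributed_distr_eq_density[OF assms(5)[OF m1]] by simp
      finally show ?thesis .
    qed
    have dV: "distr M borel V = distr (distr M borel (tau 1)) borel complex_of_real"
      unfolding V_def by (subst distr_distr) (use t1_m in \<open>auto simp: comp_def\<close>)
    have "AE y in distr M borel Y. y = 0"
      using AE2
    proof eventually_elim
      case (elim y)
      have "Measurable.pred borel (Q y)" unfolding Q_def P_def by measurable
      then have "AE x in distr M borel (tau 1). Q y (complex_of_real x)"
        using elim unfolding dV by (subst (asm) AE_distr_iff) auto
      then have "AE x in lborel. 0 < exponential_density 1 x \<longrightarrow> Q y x"
        unfolding d1 by (subst (asm) AE_density) auto
      then have "AE x in lborel. 0 < x \<longrightarrow> cis (Re (cnj t * (exp (- lam * complex_of_real x) * y))) = c"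
        by eventually_elim (auto simp: Q_def P_def exponential_density_def)
      then have "\<And>x. x > 0 \<Longrightarrow> cis (Re (cnj t * (exp (- lam * complex_of_real x) * y))) = c"
        by (rule AE_lborel_pos_all) (intro continuous_intros)
      then have "\<And>x. x > 0 \<Longrightarrow> cis (Re ((cnj t * y) * exp (- lam * complex_of_real x))) = c"
        by (simp add: mult_ac)
      then have "cnj t * y = 0" by (rule rot_zero[OF assms(4) imlam])
      then show "y = 0" using t0 by simp
    qed
    then have "AE \<omega> in M. Y \<omega> = 0" by (subst (asm) AE_distr_iff) auto
    then have "AE \<omega> in M. W \<omega> = 0" by eventually_elim (simp add: Weq)
    then have "AE z in distr M borel W. z = 0" by (subst AE_distr_iff) auto
    then have "AE z in distr M borel Z. z = 0" unfolding distrW .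
    then have "AE \<omega> in M. Z \<omega> = 0" by (subst (asm) AE_distr_iff) auto
    then have "(\<integral>\<omega>. Z \<omega> \<partial>M) = 0" by (rule integral_eq_zero_AE)
    then show False using assms(11) by simp
  qed
  then show ?thesis by (intro psi_lt1[OF assms(1,8)]) auto
qed

end
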